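(* Let $\mathcal C$ be a small cylinder category and $f:X\to X'$ a morphism in $\widetilde{\mathcal C}$. The following are equivalent: (1) for every cofibration $A\hookrightarrow B$ in $\mathcal C$ and every $x:A\to X$, the map $\pi_{B/A}(f,x):\pi_{B/A}(X,x)\to\pi_{B/A}(X',f\circ x)$ is bijective; (2) for all such data this map is surjective; (3) $f$ is a weak equivalence in $\widetilde{\mathcal C}$.
   Context: A cylinder category is a category $\mathcal C$ with two classes of morphisms, the cofibrations and the weak equivalences (morphisms in both classes are called trivial cofibrations), such that: (1) both classes contain all isomorphisms and are closed under composition; (2) weak equivalences satisfy 2-out-of-6: if $f,g,h$ are composable and $f\circ g$, $g\circ h$ are weak equivalences then $f,g,h,f\circ g\circ h$ are; (3) $\mathcal C$ has an initial object $0$ and every $0\to X$ is a cofibration; (4) pushouts of cofibrations along arbitrary maps exist and are cofibrations; (5) pushouts of trivial cofibrations are trivial cofibrations; (6) for every object $X$ the codiagonal $X\sqcup X\to X$ factors as a cofibration $X\sqcup X\hookrightarrow IX$ followed by a weak equivalence $IX\to X$; (7) every trivial cofibration admits a retraction. For a cofibration $A\hookrightarrow B$, a relative cylinder object is a factorization $B\sqcup_A B\hookrightarrow I_AB\xrightarrow{\sim}B$ of the codiagonal into a cofibration followed by a weak equivalence. For a small cylinder category $\mathcal C$, $\widetilde{\mathcal C}$ is the category of presheaves of sets on $\mathcal C$ sending the initial object to a singleton and pushouts along cofibrations to pullbacks of sets; $\mathcal C$ is identified with its image under the Yoneda embedding. A morphism $f:X\to Y$ of $\widetilde{\mathcal C}$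 is a weak equivalence if for every cofibration $i:A\hookrightarrow B$ of $\mathcal C$ and every commutative square with top $u:A\to X$ and bottom $w:B\to Y$ (so $f\circ u=w\circ i$), there exist $a:B\to X$ with $a\circ i=u$ and $h:I_AB\to Y$ for some relative cylinder object such that $h$ restricted along the two inclusions $B\to I_AB$ is $f\circ a$ and $w$. For $X\in\widetilde{\mathcal C}$, a cofibration $i:A\hookrightarrow B$ in $\mathcal C$ and $x:A\to X$, $\pi_{B/A}(X,x)$ is the set of maps $g:B\to X$ with $g\circ i=x$ modulo the relation $g\sim_A g'$ iff $(g,g'):B\sqcup_AB\to X$ extends to $I_AB\to X$ for some relative cylinder object (an equivalence relation). A morphism $f:X\to X'$ induces $\pi_{B/A}(f,x):\pi_{B/A}(X,x)\to\pi_{B/A}(X',f\circ x)$, $g\mapsto f\circ g$. *)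

theory Defs
  imports Main
begin

text \<open>A small category: objects of type 'o, morphisms of type 'm (carrier sets Ob, Ar),
  domain/codomain maps, composition (comp g f = g after f) and identities, together
  with the two classes of cofibrations and weak equivalences.\<close>

record ('o, 'm) cylcat =
  Ob   :: "'o set"
  Ar   :: "'m set"
  dom  :: "'m \<Rightarrow> 'o"
  cod  :: "'m \<Rightarrow> 'o"
  comp :: "'m \<Rightarrow> 'm \<Rightarrow> 'm"
  idm  :: "'o \<Rightarrow> 'm"
  cof  :: "'m set"
  we   :: "'m set"

definition hom :: "('o, 'm) cylcat \<Rightarrow> 'o \<Rightarrow> 'o \<Rightarrow> 'm set" where
  "hom C a b = {u \<in> Ar C. dom C u = a \<and> cod C u = b}"

definition category :: "('o, 'm) cylcat \<Rightarrow> bool" where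
  "category C \<longleftrightarrow>
     (\<forall>u\<in>Ar C. dom C u \<in> Ob C \<and> cod C u \<in> Ob C) \<and>
     (\<forall>a\<in>Ob C. idm C a \<in> hom C a a) \<and>
     (\<forall>u\<in>Ar C. \<forall>v\<in>Ar C. cod C u = dom C v \<longrightarrow> comp C v u \<in> hom C (dom C u) (cod C v)) \<and>
     (\<forall>u\<in>Ar C. comp C u (idm C (dom C u)) = u \<and> comp C (idm C (cod C u)) u = u) \<and>
     (\<forall>u\<in>Ar C. \<forall>v\<in>Ar C. \<forall>w\<in>Ar C. cod C u = dom C v \<longrightarrow> cod C v = dom C w \<longrightarrow>
        comp C w (comp C v u) = comp C (comp C w v) u)"

definition iso :: "('o, 'm) cylcat \<Rightarrow> 'm \<Rightarrow> bool" where
  "iso C u \<longleftrightarrow> u \<in> Ar C \<and> (\<exists>v\<in>hom C (cod C u) (dom C u).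
      comp C v u = idm C (dom C u) \<and> comp C u v = idm C (cod C u))"

definition initial :: "('o, 'm) cylcat \<Rightarrow> 'o \<Rightarrow> bool" where
  "initial C z \<longleftrightarrow> z \<in> Ob C \<and> (\<forall>c\<in>Ob C. \<exists>!u. u \<in> hom C z c)"

text \<open>is_pushout C i g j k: the square with i : A \<rightarrow> B, g : A \<rightarrow> C', j : B \<rightarrow> D,
  k : C' \<rightarrow> D (so j o i = k o g) is a pushout; k is the pushout of i along g.\<close>

definition is_pushout :: "('o, 'm) cylcat \<Rightarrow> 'm \<Rightarrow> 'm \<Rightarrow> 'm \<Rightarrow> 'm \<Rightarrow> bool" where
  "is_pushout C i g j k \<longleftrightarrow>
     i \<in> Ar C \<and> g \<in> Ar C \<and> j \<in> Ar C \<and> k \<in> Ar C \<and>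
     dom C i = dom C g \<and> dom C j = cod C i \<and> dom C k = cod C g \<and> cod C j = cod C k \<and>
     comp C j i = comp C k g \<and>
     (\<forall>E\<in>Ob C. \<forall>p\<in>hom C (cod C i) E. \<forall>q\<in>hom C (cod C g) E.
        comp C p i = comp C q g \<longrightarrow>
        (\<exists>!r. r \<in> hom C (cod C j) E \<and> comp C r j = p \<and> comp C r k = q))"

definition is_coproduct :: "('o, 'm) cylcat \<Rightarrow> 'o \<Rightarrow> 'o \<Rightarrow> 'm \<Rightarrow> 'm \<Rightarrow> bool" where
  "is_coproduct C a b in0 in1 \<longleftrightarrow>
     in0 \<in> Ar C \<and> in1 \<in> Ar C \<and> dom C in0 = a \<and> dom C in1 = b \<and> cod C in0 = cod C in1 \<and>
     (\<forall>E\<in>Ob C. \<forall>p\<in>hom C a E. \<forall>q\<in>hom C b E.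
        (\<exists>!r. r \<in> hom C (cod C in0) E \<and> comp C r in0 = p \<and> comp C r in1 = q))"

definition cylinder_category :: "('o, 'm) cylcat \<Rightarrow> bool" where
  "cylinder_category C \<longleftrightarrow>
     category C \<and> cof C \<subseteq> Ar C \<and> we C \<subseteq> Ar C \<and>
     \<comment> \<open>(1)\<close>
     (\<forall>u. iso C u \<longrightarrow> u \<in> cof C \<and> u \<in> we C) \<and>
     (\<forall>u\<in>cof C. \<forall>v\<in>cof C. cod C u = dom C v \<longrightarrow> comp C v u \<in> cof C) \<and>
     (\<forall>u\<in>we C. \<forall>v\<in>we C. cod C u = dom C v \<longrightarrow> comp C v u \<in> we C) \<and>
     \<comment> \<open>(2) 2-out-of-6 for h : a \<rightarrow> b, g : b \<rightarrow> c, f : c \<rightarrow> d\<close>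
     (\<forall>f\<in>Ar C. \<forall>g\<in>Ar C. \<forall>h\<in>Ar C. cod C h = dom C g \<longrightarrow> cod C g = dom C f \<longrightarrow>
        comp C f g \<in> we C \<longrightarrow> comp C g h \<in> we C \<longrightarrow>
        f \<in> we C \<and> g \<in> we C \<and> h \<in> we C \<and> comp C f (comp C g h) \<in> we C) \<and>
     \<comment> \<open>(3)\<close>
     (\<exists>z. initial C z) \<and>
     (\<forall>z c u. initial C z \<longrightarrow> u \<in> hom C z c \<longrightarrow> u \<in> cof C) \<and>
     \<comment> \<open>(4)\<close>
     (\<forall>i\<in>cof C. \<forall>g\<in>Ar C. dom C g = dom C i \<longrightarrow>
        (\<exists>j k. is_pushout C i g j k) \<and> (\<forall>j k. is_pushout C i g j k \<longrightarrow> k \<in> cof C)) \<and>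
     \<comment> \<open>(5)\<close>
     (\<forall>i\<in>cof C \<inter> we C. \<forall>g j k. is_pushout C i g j k \<longrightarrow> k \<in> cof C \<inter> we C) \<and>
     \<comment> \<open>(6) codiagonal of a coproduct X \<squnion> X factors as cofibration then weak equivalence\<close>
     (\<forall>a\<in>Ob C. \<exists>in0 in1 k p. is_coproduct C a a in0 in1 \<and>
        k \<in> cof C \<and> dom C k = cod C in0 \<and> p \<in> we C \<and> p \<in> hom C (cod C k) a \<and>
        comp C p (comp C k in0) = idm C a \<and> comp C p (comp C k in1) = idm C a) \<and>
     \<comment> \<open>(7)\<close>
     (\<forall>u\<in>cof C \<inter> we C. \<exists>r\<in>hom C (cod C u) (dom C u). comp C r u = idm C (dom C u))"

text \<open>Relative cylinder object for a cofibration i : A \<rightarrow> B: a pushout B \<squnion>_A B (legs in0, in1),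
  a cofibration k : B \<squnion>_A B \<rightarrow> I and a weak equivalence p : I \<rightarrow> B with p o k the codiagonal.
  The two inclusions B \<rightarrow> I are k o in0 and k o in1.\<close>

definition rel_cylinder :: "('o, 'm) cylcat \<Rightarrow> 'm \<Rightarrow> 'm \<Rightarrow> 'm \<Rightarrow> 'm \<Rightarrow> 'm \<Rightarrow> bool" where
  "rel_cylinder C i in0 in1 k p \<longleftrightarrow>
     i \<in> cof C \<and> is_pushout C i i in0 in1 \<and> k \<in> cof C \<and> dom C k = cod C in0 \<and>
     p \<in> we C \<and> p \<in> hom C (cod C k) (cod C i) \<and>
     comp C p (comp C k in0) = idm C (cod C i) \<and> comp C p (comp C k in1) = idm C (cod C i)"

text \<open>A presheaf is given by its sets Xo c and restriction maps Xm u : Xo (cod u) \<rightarrow> Xo (dom u).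
  By Yoneda, a map from (the image of) an object c to X is an element of Xo c, and
  precomposition with u corresponds to Xm u.\<close>

definition is_presheaf :: "('o, 'm) cylcat \<Rightarrow> ('o \<Rightarrow> 'x set) \<Rightarrow> ('m \<Rightarrow> 'x \<Rightarrow> 'x) \<Rightarrow> bool" where
  "is_presheaf C Xo Xm \<longleftrightarrow>
     (\<forall>u\<in>Ar C. Xm u ` Xo (cod C u) \<subseteq> Xo (dom C u)) \<and>
     (\<forall>a\<in>Ob C. \<forall>x\<in>Xo a. Xm (idm C a) x = x) \<and>
     (\<forall>u\<in>Ar C. \<forall>v\<in>Ar C. cod C u = dom C v \<longrightarrow>
        (\<forall>x\<in>Xo (cod C v). Xm (comp C v u) x = Xm u (Xm v x))) \<and>
     (\<forall>z. initial C z \<longrightarrow> (\<exists>x. Xo z = {x})) \<and>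
     (\<forall>i g j k. i \<in> cof C \<longrightarrow> is_pushout C i g j k \<longrightarrow>
        bij_betw (\<lambda>d. (Xm j d, Xm k d)) (Xo (cod C j))
          {(b, c). b \<in> Xo (cod C i) \<and> c \<in> Xo (cod C g) \<and> Xm i b = Xm g c})"

definition psh_mor :: "('o, 'm) cylcat \<Rightarrow> ('o \<Rightarrow> 'x set) \<Rightarrow> ('m \<Rightarrow> 'x \<Rightarrow> 'x)
    \<Rightarrow> ('o \<Rightarrow> 'y set) \<Rightarrow> ('m \<Rightarrow> 'y \<Rightarrow> 'y) \<Rightarrow> ('o \<Rightarrow> 'x \<Rightarrow> 'y) \<Rightarrow> bool" where
  "psh_mor C Xo Xm Yo Ym f \<longleftrightarrow>
     (\<forall>a\<in>Ob C. f a ` Xo a \<subseteq> Yo a) \<and>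
     (\<forall>u\<in>Ar C. \<forall>x\<in>Xo (cod C u). f (dom C u) (Xm u x) = Ym u (f (cod C u) x))"

definition psh_weq :: "('o, 'm) cylcat \<Rightarrow> ('o \<Rightarrow> 'x set) \<Rightarrow> ('m \<Rightarrow> 'x \<Rightarrow> 'x)
    \<Rightarrow> ('o \<Rightarrow> 'y set) \<Rightarrow> ('m \<Rightarrow> 'y \<Rightarrow> 'y) \<Rightarrow> ('o \<Rightarrow> 'x \<Rightarrow> 'y) \<Rightarrow> bool" where
  "psh_weq C Xo Xm Yo Ym f \<longleftrightarrow>
     (\<forall>i\<in>cof C. \<forall>u\<in>Xo (dom C i). \<forall>w\<in>Yo (cod C i). f (dom C i) u = Ym i w \<longrightarrow>
        (\<exists>a\<in>Xo (cod C i). Xm i a = u \<and>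
          (\<exists>in0 in1 k p h. rel_cylinder C i in0 in1 k p \<and> h \<in> Yo (cod C k) \<and>
             Ym (comp C k in0) h = f (cod C i) a \<and> Ym (comp C k in1) h = w)))"

definition rel_homotopic :: "('o, 'm) cylcat \<Rightarrow> ('o \<Rightarrow> 'x set) \<Rightarrow> ('m \<Rightarrow> 'x \<Rightarrow> 'x)
    \<Rightarrow> 'm \<Rightarrow> 'x \<Rightarrow> 'x \<Rightarrow> bool" where
  "rel_homotopic C Xo Xm i g g' \<longleftrightarrow>
     (\<exists>in0 in1 k p h. rel_cylinder C i in0 in1 k p \<and> h \<in> Xo (cod C k) \<and>
        Xm (comp C k in0) h = g \<and> Xm (comp C k in1) h = g')"

definition pi_fib :: "('o, 'm) cylcat \<Rightarrow> ('o \<Rightarrow> 'x set) \<Rightarrow> ('m \<Rightarrow> 'x \<Rightarrow> 'x) \<Rightarrow> 'm \<Rightarrow> 'x \<Rightarrow> 'x set" where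
  "pi_fib C Xo Xm i x = {g \<in> Xo (cod C i). Xm i g = x}"

definition pi_rel :: "('o, 'm) cylcat \<Rightarrow> ('o \<Rightarrow> 'x set) \<Rightarrow> ('m \<Rightarrow> 'x \<Rightarrow> 'x) \<Rightarrow> 'm \<Rightarrow> 'x \<Rightarrow> 'x rel" where
  "pi_rel C Xo Xm i x = {(g, g'). g \<in> pi_fib C Xo Xm i x \<and> g' \<in> pi_fib C Xo Xm i x \<and>
      rel_homotopic C Xo Xm i g g'}"

definition pi_set :: "('o, 'm) cylcat \<Rightarrow> ('o \<Rightarrow> 'x set) \<Rightarrow> ('m \<Rightarrow> 'x \<Rightarrow> 'x) \<Rightarrow> 'm \<Rightarrow> 'x \<Rightarrow> 'x set set" where
  "pi_set C Xo Xm i x = pi_fib C Xo Xm i x // pi_rel C Xo Xm i x"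

text \<open>\<pi>_{B/A}(f,x): the class [g] is sent to the class of f o g (computed as the
  saturation of the image of [g]).\<close>
definition pi_map :: "('o, 'm) cylcat \<Rightarrow> ('o \<Rightarrow> 'y set) \<Rightarrow> ('m \<Rightarrow> 'y \<Rightarrow> 'y)
    \<Rightarrow> ('o \<Rightarrow> 'x \<Rightarrow> 'y) \<Rightarrow> 'm \<Rightarrow> 'x \<Rightarrow> 'x set \<Rightarrow> 'y set" where
  "pi_map C Yo Ym f i x S = pi_rel C Yo Ym i (f (dom C i) x) `` (f (cod C i) ` S)"

end

theory Submission
  imports Defs
begin

locale cc =
  fixes C :: "('o, 'm) cylcat"
  assumes cyl: "cylinder_category C"
begin

lemmas ax_cat = cyl[unfolded cylinder_category_def, THEN conjunct1]
lemmas ax_cofsub = cyl[unfolded cylinder_category_def, THEN conjunct2, THEN conjunct1]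
lemmas ax_wesub = cyl[unfolded cylinder_category_def, THEN conjunct2, THEN conjunct2, THEN conjunct1]
lemmas ax_iso = cyl[unfolded cylinder_category_def, THEN conjunct2, THEN conjunct2, THEN conjunct2, THEN conjunct1]
lemmas ax_cofcomp = cyl[unfolded cylinder_category_def, THEN conjunct2, THEN conjunct2, THEN conjunct2, THEN conjunct2, THEN conjunct1]
lemmas ax_wecomp = cyl[unfolded cylinder_category_def, THEN conjunct2, THEN conjunct2, THEN conjunct2, THEN conjunct2, THEN conjunct2, THEN conjunct1]
lemmas ax_six = cyl[unfolded cylinder_category_def, THEN conjunct2, THEN conjunct2, THEN conjunct2, THEN conjunct2, THEN conjunct2, THEN conjunct2, THEN conjunct1]
lemmas ax_ini = cyl[unfolded cylinder_category_def, THEN conjunct2, THEN conjunct2, THEN conjunct2, THEN conjunct2, THEN conjunct2, THEN conjunct2, THEN conjunct2, THEN conjunct1]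
lemmas ax_inicof = cyl[unfolded cylinder_category_def, THEN conjunct2, THEN conjunct2, THEN conjunct2, THEN conjunct2, THEN conjunct2, THEN conjunct2, THEN conjunct2, THEN conjunct2, THEN conjunct1]
lemmas ax_po = cyl[unfolded cylinder_category_def, THEN conjunct2, THEN conjunct2, THEN conjunct2, THEN conjunct2, THEN conjunct2, THEN conjunct2, THEN conjunct2, THEN conjunct2, THEN conjunct2, THEN conjunct1]
lemmas ax_tcof = cyl[unfolded cylinder_category_def, THEN conjunct2, THEN conjunct2, THEN conjunct2, THEN conjunct2, THEN conjunct2, THEN conjunct2, THEN conjunct2, THEN conjunct2, THEN conjunct2, THEN conjunct2, THEN conjunct1]
lemmas ax_cyl = cyl[unfolded cylinder_category_def, THEN conjunct2, THEN conjunct2, THEN conjunct2, THEN conjunct2, THEN conjunct2, THEN conjunct2, THEN conjunct2, THEN conjunct2, THEN conjunct2, THEN conjunct2, THEN conjunct2, THEN conjunct1]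
lemmas ax_retr = cyl[unfolded cylinder_category_def, THEN conjunct2, THEN conjunct2, THEN conjunct2, THEN conjunct2, THEN conjunct2, THEN conjunct2, THEN conjunct2, THEN conjunct2, THEN conjunct2, THEN conjunct2, THEN conjunct2, THEN conjunct2]
lemma cat: "category C" by (rule ax_cat)

lemma ar_ob: "u \<in> Ar C \<Longrightarrow> dom C u \<in> Ob C \<and> cod C u \<in> Ob C"
  using cat unfolding category_def by blast

lemma id_ar[simp]: "a \<in> Ob C \<Longrightarrow> idm C a \<in> Ar C"
  and id_dom[simp]: "a \<in> Ob C \<Longrightarrow> dom C (idm C a) = a"
  and id_cod[simp]: "a \<in> Ob C \<Longrightarrow> cod C (idm C a) = a"
  using cat unfolding category_def hom_def by blast+

lemma comp_ar[simp]: "u \<in> Ar C \<Longrightarrow> v \<in> Ar C \<Longrightarrow> cod C u = dom C v \<Longrightarrow> comp C v u \<in> Ar C"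
  and comp_dom[simp]: "u \<in> Ar C \<Longrightarrow> v \<in> Ar C \<Longrightarrow> cod C u = dom C v \<Longrightarrow> dom C (comp C v u) = dom C u"
  and comp_cod[simp]: "u \<in> Ar C \<Longrightarrow> v \<in> Ar C \<Longrightarrow> cod C u = dom C v \<Longrightarrow> cod C (comp C v u) = cod C v"
  using cat unfolding category_def hom_def by blast+

lemma id_r[simp]: "u \<in> Ar C \<Longrightarrow> comp C u (idm C (dom C u)) = u"
  and id_l[simp]: "u \<in> Ar C \<Longrightarrow> comp C (idm C (cod C u)) u = u"
  using cat unfolding category_def by blast+

lemma id_id[simp]: "a \<in> Ob C \<Longrightarrow> comp C (idm C a) (idm C a) = idm C a"
  using id_l[of "idm C a"] by simp

lemma assoc: "u \<in> Ar C \<Longrightarrow> v \<in> Ar C \<Longrightarrow> w \<in> Ar C \<Longrightarrow> cod C u = dom C v \<Longrightarrow> cod C v = dom C w \<Longrightarrow>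
   comp C (comp C w v) u = comp C w (comp C v u)"
  using cat unfolding category_def by metis

lemma axs1: "cof C \<subseteq> Ar C"
  by (rule ax_cofsub)
lemma axs2: "we C \<subseteq> Ar C"
  by (rule ax_wesub)
lemma axs3: "\<forall>u. iso C u \<longrightarrow> u \<in> cof C \<and> u \<in> we C"
  by (rule ax_iso)
lemmas axs = axs1 axs2 axs3

lemma cof_ar: "u \<in> cof C \<Longrightarrow> u \<in> Ar C" using axs by blast
lemma we_ar: "u \<in> we C \<Longrightarrow> u \<in> Ar C" using axs by blast

lemma id_iso: "a \<in> Ob C \<Longrightarrow> iso C (idm C a)"
  unfolding iso_def hom_def by (intro conjI bexI[of _ "idm C a"]) simp_all

lemma id_we: "a \<in> Ob C \<Longrightarrow> idm C a \<in> we C"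
  using axs(3) id_iso by blast

lemma cof_comp: "u \<in> cof C \<Longrightarrow> v \<in> cof C \<Longrightarrow> cod C u = dom C v \<Longrightarrow> comp C v u \<in> cof C"
  using ax_cofcomp by blast
lemma we_comp: "u \<in> we C \<Longrightarrow> v \<in> we C \<Longrightarrow> cod C u = dom C v \<Longrightarrow> comp C v u \<in> we C"
  using ax_wecomp by blast

lemma six: "f \<in> Ar C \<Longrightarrow> g \<in> Ar C \<Longrightarrow> h \<in> Ar C \<Longrightarrow> cod C h = dom C g \<Longrightarrow> cod C g = dom C f \<Longrightarrow>
        comp C f g \<in> we C \<Longrightarrow> comp C g h \<in> we C \<Longrightarrow> f \<in> we C \<and> g \<in> we C \<and> h \<in> we C"
  using ax_six by blast

lemma we_left: "f \<in> Ar C \<Longrightarrow> g \<in> we C \<Longrightarrow> cod C g = dom C f \<Longrightarrow> comp C f g \<in> we C \<Longrightarrow> f \<in> we C"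
  using six[of f g "idm C (dom C g)"] we_ar ar_ob by (metis id_ar id_cod id_r)

lemma we_right: "f \<in> we C \<Longrightarrow> g \<in> Ar C \<Longrightarrow> cod C g = dom C f \<Longrightarrow> comp C f g \<in> we C \<Longrightarrow> g \<in> we C"
  using six[of "idm C (cod C f)" f g] we_ar ar_ob by (metis id_ar id_dom id_l)

lemma ex_initial: "\<exists>z. initial C z" using ax_ini by blast
lemma ini_cof: "initial C z \<Longrightarrow> u \<in> hom C z c \<Longrightarrow> u \<in> cof C"
  using ax_inicof by blast
lemma ini_ex: "initial C z \<Longrightarrow> c \<in> Ob C \<Longrightarrow> \<exists>u. u \<in> hom C z c"
  unfolding initial_def by blast
lemma ini_uniq: "initial C z \<Longrightarrow> u \<in> hom C z c \<Longrightarrow> v \<in> hom C z c \<Longrightarrow> u = v"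
  unfolding initial_def hom_def using ar_ob by blast

lemma po_ex: "i \<in> cof C \<Longrightarrow> g \<in> Ar C \<Longrightarrow> dom C g = dom C i \<Longrightarrow> \<exists>j k. is_pushout C i g j k"
  using ax_po by blast
lemma po_cof: assumes "i \<in> cof C" "is_pushout C i g j k" shows "k \<in> cof C"
proof -
  have "g \<in> Ar C" "dom C g = dom C i" using assms(2) unfolding is_pushout_def by auto
  thus ?thesis using ax_po assms by blast
qed
lemma po_tcof: "i \<in> cof C \<Longrightarrow> i \<in> we C \<Longrightarrow> is_pushout C i g j k \<Longrightarrow> k \<in> cof C \<and> k \<in> we C"
  using ax_tcof by blast
lemma cyl_obj: "a \<in> Ob C \<Longrightarrow> \<exists>in0 in1 k p. is_coproduct C a a in0 in1 \<and>
        k \<in> cof C \<and> dom C k = cod C in0 \<and> p \<in> we C \<and> p \<in> hom C (cod C k) a \<and>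
        comp C p (comp C k in0) = idm C a \<and> comp C p (comp C k in1) = idm C a"
  using ax_cyl by blast

lemma po_sym: assumes "is_pushout C i g j k" shows "is_pushout C g i k j"
proof -
  have U: "\<forall>E\<in>Ob C. \<forall>p\<in>hom C (cod C i) E. \<forall>q\<in>hom C (cod C g) E.
        comp C p i = comp C q g \<longrightarrow>
        (\<exists>!r. r \<in> hom C (cod C j) E \<and> comp C r j = p \<and> comp C r k = q)"
    using assms unfolding is_pushout_def by blast
  have U2: "\<forall>E\<in>Ob C. \<forall>p\<in>hom C (cod C g) E. \<forall>q\<in>hom C (cod C i) E.
        comp C p g = comp C q i \<longrightarrow>
        (\<exists>!r. r \<in> hom C (cod C k) E \<and> comp C r k = p \<and> comp C r j = q)"
  proof (intro ballI impI)
    fix E p q assume "E \<in> Ob C" "p \<in> hom C (cod C g) E" "q \<in> hom C (cod C i) E" "comp C p g = comp C q i"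
    then have "\<exists>!r. r \<in> hom C (cod C j) E \<and> comp C r j = q \<and> comp C r k = p" using U by metis
    moreover have "cod C j = cod C k" using assms unfolding is_pushout_def by blast
    ultimately show "\<exists>!r. r \<in> hom C (cod C k) E \<and> comp C r k = p \<and> comp C r j = q" by (simp add: conj_commute)
  qed
  have d: "i \<in> Ar C" "g \<in> Ar C" "j \<in> Ar C" "k \<in> Ar C"
     "dom C i = dom C g" "dom C j = cod C i" "dom C k = cod C g" "cod C j = cod C k"
     "comp C j i = comp C k g" using assms unfolding is_pushout_def by blast+
  show ?thesis unfolding is_pushout_def
    apply (intro conjI)
    apply (fact d(2)) apply (fact d(1)) apply (fact d(4)) apply (fact d(3))
    apply (rule d(5)[symmetric]) apply (fact d(7)) apply (fact d(6)) apply (rule d(8)[symmetric])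
    apply (rule d(9)[symmetric]) by (fact U2)
qed

lemma po_data: assumes "is_pushout C i g j k" shows "i \<in> Ar C" "g \<in> Ar C" "j \<in> Ar C" "k \<in> Ar C"
     "dom C i = dom C g" "dom C j = cod C i" "dom C k = cod C g" "cod C j = cod C k"
     "comp C j i = comp C k g"
  using assms unfolding is_pushout_def by blast+

lemma po_U: assumes "is_pushout C i g j k" "E \<in> Ob C" "p \<in> hom C (cod C i) E" "q \<in> hom C (cod C g) E"
  "comp C p i = comp C q g"
  shows "\<exists>!r. r \<in> hom C (cod C j) E \<and> comp C r j = p \<and> comp C r k = q"
proof -
  note U = assms(1)[unfolded is_pushout_def, THEN conjunct2, THEN conjunct2, THEN conjunct2,
     THEN conjunct2, THEN conjunct2, THEN conjunct2, THEN conjunct2, THEN conjunct2, THEN conjunct2]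
  show ?thesis by (rule U[rule_format, OF assms(2-5)])
qed

lemma ex1_eq: "\<exists>!x. P x \<Longrightarrow> P a \<Longrightarrow> P b \<Longrightarrow> a = b" by blast

lemma po_uniq: assumes "is_pushout C i g j k" "r1 \<in> hom C (cod C j) E" "r2 \<in> hom C (cod C j) E"
  "comp C r1 j = comp C r2 j" "comp C r1 k = comp C r2 k"
  shows "r1 = r2"
proof -
  have d: "i \<in> Ar C" "g \<in> Ar C" "j \<in> Ar C" "k \<in> Ar C" "dom C j = cod C i" "dom C k = cod C g"
    "cod C j = cod C k" "comp C j i = comp C k g" using po_data[OF assms(1)] by auto
  have E: "E \<in> Ob C" using assms(2) ar_ob unfolding hom_def by blast
  have r1: "r1 \<in> Ar C" "dom C r1 = cod C j" "cod C r1 = E" using assms(2) unfolding hom_def by auto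
  have "comp C (comp C r1 j) i = comp C (comp C r1 k) g"
    using d r1 by (simp add: assoc)
  moreover have "comp C r1 j \<in> hom C (cod C i) E" "comp C r1 k \<in> hom C (cod C g) E"
    using d r1 unfolding hom_def by auto
  ultimately have "\<exists>!r. r \<in> hom C (cod C j) E \<and> comp C r j = comp C r1 j \<and> comp C r k = comp C r1 k"
    using po_U[OF assms(1) E] by blast
  thus ?thesis apply (rule ex1_eq) using assms by auto
qed

lemma po_univ: assumes "is_pushout C i g j k" "p \<in> hom C (cod C i) E" "q \<in> hom C (cod C g) E"
  "comp C p i = comp C q g"
  shows "\<exists>r. r \<in> hom C (cod C j) E \<and> comp C r j = p \<and> comp C r k = q"
proof -
  have E: "E \<in> Ob C" using assms(2) ar_ob unfolding hom_def by blast
  show ?thesis using po_U[OF assms(1) E assms(2-4)] by blast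
qed

lemma cp_U: assumes "is_coproduct C a b i0 i1" "E \<in> Ob C" "p \<in> hom C a E" "q \<in> hom C b E"
  shows "\<exists>!r. r \<in> hom C (cod C i0) E \<and> comp C r i0 = p \<and> comp C r i1 = q"
proof -
  note U = assms(1)[unfolded is_coproduct_def, THEN conjunct2, THEN conjunct2, THEN conjunct2,
     THEN conjunct2, THEN conjunct2]
  show ?thesis by (rule U[rule_format, OF assms(2-4)])
qed

lemma cp_data: assumes "is_coproduct C a b i0 i1" shows "i0 \<in> Ar C" "i1 \<in> Ar C" "dom C i0 = a" "dom C i1 = b" "cod C i0 = cod C i1"
  using assms unfolding is_coproduct_def by blast+

lemma cp_uniq: assumes "is_coproduct C a b i0 i1" "r1 \<in> hom C (cod C i0) E" "r2 \<in> hom C (cod C i0) E"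
  "comp C r1 i0 = comp C r2 i0" "comp C r1 i1 = comp C r2 i1"
  shows "r1 = r2"
proof -
  note d = cp_data[OF assms(1)]
  have E: "E \<in> Ob C" using assms(2) ar_ob unfolding hom_def by blast
  have "comp C r1 i0 \<in> hom C a E" "comp C r1 i1 \<in> hom C b E"
    using d assms(2) unfolding hom_def by auto
  then have "\<exists>!r. r \<in> hom C (cod C i0) E \<and> comp C r i0 = comp C r1 i0 \<and> comp C r i1 = comp C r1 i1"
    using cp_U[OF assms(1) E] by blast
  thus ?thesis apply (rule ex1_eq) using assms by auto
qed

lemma cp_univ: assumes "is_coproduct C a b i0 i1" "p \<in> hom C a E" "q \<in> hom C b E"
  shows "\<exists>r. r \<in> hom C (cod C i0) E \<and> comp C r i0 = p \<and> comp C r i1 = q"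
proof -
  have E: "E \<in> Ob C" using assms(2) ar_ob unfolding hom_def by blast
  show ?thesis using cp_U[OF assms(1) E assms(2,3)] by blast
qed

lemma cp_po: assumes "is_coproduct C a b i0 i1" "initial C z" "z0 \<in> hom C z a" "z1 \<in> hom C z b"
  shows "is_pushout C z0 z1 i0 i1"
proof -
  note d = cp_data[OF assms(1)]
  have z: "z0 \<in> Ar C" "z1 \<in> Ar C" "dom C z0 = z" "dom C z1 = z" "cod C z0 = a" "cod C z1 = b"
    using assms(3,4) unfolding hom_def by auto
  have eq: "comp C i0 z0 = comp C i1 z1"
    apply (rule ini_uniq[OF assms(2), of _ "cod C i0"]) using d z unfolding hom_def by auto
  have U: "\<forall>E\<in>Ob C. \<forall>p\<in>hom C (cod C z0) E. \<forall>q\<in>hom C (cod C z1) E.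
        comp C p z0 = comp C q z1 \<longrightarrow>
        (\<exists>!r. r \<in> hom C (cod C i0) E \<and> comp C r i0 = p \<and> comp C r i1 = q)"
  proof (intro ballI impI)
    fix E p q assume "E \<in> Ob C" "p \<in> hom C (cod C z0) E" "q \<in> hom C (cod C z1) E"
    then have "E \<in> Ob C" "p \<in> hom C a E" "q \<in> hom C b E" using z by simp_all
    thus "\<exists>!r. r \<in> hom C (cod C i0) E \<and> comp C r i0 = p \<and> comp C r i1 = q"
      using cp_U[OF assms(1)] by blast
  qed
  have e1: "dom C z0 = dom C z1" "dom C i0 = cod C z0" "dom C i1 = cod C z1" using z d by auto
  show ?thesis unfolding is_pushout_def
    apply (intro conjI)
    apply (fact z(1)) apply (fact z(2)) apply (fact d(1)) apply (fact d(2))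
    apply (fact e1(1)) apply (fact e1(2)) apply (fact e1(3)) apply (fact d(5))
    apply (fact eq) by (fact U)
qed

lemma hom_iff: "u \<in> hom C a b \<longleftrightarrow> u \<in> Ar C \<and> dom C u = a \<and> cod C u = b"
  unfolding hom_def by blast

lemma ceq: "comp C v u = t \<Longrightarrow> u \<in> Ar C \<Longrightarrow> v \<in> Ar C \<Longrightarrow> x \<in> Ar C \<Longrightarrow>
   cod C x = dom C u \<Longrightarrow> cod C u = dom C v \<Longrightarrow> comp C v (comp C u x) = comp C t x"
  using assoc[of x u v] by simp

lemma initial_maps: "initial C z \<Longrightarrow> c \<in> Ob C \<Longrightarrow> \<exists>u. u \<in> hom C z c \<and> u \<in> cof C"
  using ini_ex ini_cof by metis

lemma coprod: assumes "a \<in> Ob C" "b \<in> Ob C"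
  shows "\<exists>z za zb d0 d1. initial C z \<and> za \<in> hom C z a \<and> zb \<in> hom C z b \<and> za \<in> cof C \<and> zb \<in> cof C \<and>
     is_pushout C za zb d0 d1 \<and> d0 \<in> cof C \<and> d1 \<in> cof C"
proof -
  obtain z where z: "initial C z" using ex_initial by blast
  obtain za zb where zz: "za \<in> hom C z a" "zb \<in> hom C z b" "za \<in> cof C" "zb \<in> cof C"
    using initial_maps[OF z] assms by blast
  obtain d0 d1 where po: "is_pushout C za zb d0 d1"
    using po_ex[of za zb] zz unfolding hom_iff by auto
  have "d1 \<in> cof C" using po_cof[OF _ po] zz by blast
  moreover have "d0 \<in> cof C" using po_cof[OF _ po_sym[OF po]] zz by blast
  ultimately show ?thesis
    apply - apply (rule exI[of _ z], rule exI[of _ za], rule exI[of _ zb], rule exI[of _ d0], rule exI[of _ d1])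
    using z zz po by simp
qed

lemma mapcyl: assumes u: "u \<in> Ar C"
  shows "\<exists>k b r. k \<in> cof C \<and> dom C k = dom C u \<and> b \<in> cof C \<and> b \<in> we C \<and> dom C b = cod C u \<and>
     cod C b = cod C k \<and> r \<in> hom C (cod C k) (cod C u) \<and> comp C r b = idm C (cod C u) \<and> comp C r k = u"
proof -
  define P where "P = dom C u"
  define J where "J = cod C u"
  have PO: "P \<in> Ob C" "J \<in> Ob C" using ar_ob u P_def J_def by auto
  obtain c0 c1 kP pP where cy: "is_coproduct C P P c0 c1" "kP \<in> cof C" "dom C kP = cod C c0"
    "pP \<in> we C" "pP \<in> hom C (cod C kP) P" "comp C pP (comp C kP c0) = idm C P"
    "comp C pP (comp C kP c1) = idm C P"
    using cyl_obj[OF PO(1)] by blast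
  have c: "c0 \<in> Ar C" "c1 \<in> Ar C" "dom C c0 = P" "dom C c1 = P" "cod C c0 = cod C c1"
    using cp_data[OF cy(1)] by auto
  have kP: "kP \<in> Ar C" using cy cof_ar by auto
  have pP: "pP \<in> Ar C" "dom C pP = cod C kP" "cod C pP = P" using cy(5) hom_iff by auto
  obtain z where z: "initial C z" using ex_initial by blast
  obtain zP where zP: "zP \<in> hom C z P" "zP \<in> cof C" using initial_maps[OF z PO(1)] by blast
  have "is_pushout C zP zP c0 c1" using cp_po[OF cy(1) z zP(1) zP(1)] .
  hence c1cof: "c1 \<in> cof C" using po_cof zP by blast
  define j1 where "j1 = comp C kP c1"
  have j1: "j1 \<in> Ar C" "dom C j1 = P" "cod C j1 = cod C kP" using j1_def c kP cy(3) by auto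
  have j1cof: "j1 \<in> cof C" unfolding j1_def using cof_comp[OF c1cof cy(2)] c cy(3) by auto
  have j1we: "j1 \<in> we C"
    apply (rule we_right[OF cy(4) j1(1)])
    using pP j1 cy(7) id_we PO j1_def by auto
  obtain jj b where po: "is_pushout C j1 u jj b" using po_ex[OF j1cof u] j1 P_def by auto
  have pod: "jj \<in> Ar C" "b \<in> Ar C" "dom C jj = cod C kP" "dom C b = J" "cod C jj = cod C b"
     "comp C jj j1 = comp C b u"
    using po_data[OF po] j1 J_def by auto
  have bt: "b \<in> cof C" "b \<in> we C" using po_tcof[OF j1cof j1we po] by auto
  define M where "M = cod C b"
  have "\<exists>r. r \<in> hom C (cod C jj) J \<and> comp C r jj = comp C u pP \<and> comp C r b = idm C J"
  proof (rule po_univ[OF po])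
    show "comp C u pP \<in> hom C (cod C j1) J" using u pP j1 P_def J_def hom_iff by auto
    show "idm C J \<in> hom C (cod C u) J" using PO J_def hom_iff by auto
    have "comp C (comp C u pP) j1 = comp C u (comp C pP j1)" using assoc u pP j1 P_def by auto
    also have "\<dots> = u" using cy(7) j1_def u P_def by simp
    also have "\<dots> = comp C (idm C J) u" using u J_def by simp
    finally show "comp C (comp C u pP) j1 = comp C (idm C J) u" .
  qed
  then obtain r where r: "r \<in> hom C M J" "comp C r jj = comp C u pP" "comp C r b = idm C J"
    using pod M_def by auto
  have rA: "r \<in> Ar C" "dom C r = M" "cod C r = J" using r hom_iff by auto
  define k where "k = comp C jj (comp C kP c0)"
  have k: "k \<in> Ar C" "dom C k = P" "cod C k = M" using k_def pod kP c cy(3) M_def by auto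
  have rk: "comp C r k = u"
  proof -
    have "comp C r k = comp C (comp C u pP) (comp C kP c0)"
      unfolding k_def apply (rule ceq[OF r(2)]) using pod rA kP c cy(3) M_def by auto
    also have "\<dots> = comp C u (comp C pP (comp C kP c0))" using assoc u pP kP c cy(3) P_def by auto
    also have "\<dots> = u" using cy(6) u P_def by simp
    finally show ?thesis .
  qed
  obtain z' za zb d0 d1 where cp: "initial C z'" "za \<in> hom C z' P" "zb \<in> hom C z' J"
    "za \<in> cof C" "zb \<in> cof C" "is_pushout C za zb d0 d1" "d0 \<in> cof C" "d1 \<in> cof C"
    using coprod[OF PO] by blast
  have dd: "d0 \<in> Ar C" "d1 \<in> Ar C" "dom C d0 = P" "dom C d1 = J" "cod C d0 = cod C d1"
    using po_data[OF cp(6)] cp(2,3) hom_iff by auto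
  obtain v where v: "v \<in> hom C (cod C c0) (cod C d0)" "comp C v c0 = d0" "comp C v c1 = comp C d1 u"
    using cp_univ[OF cy(1), of d0 "cod C d0" "comp C d1 u"] dd u P_def J_def hom_iff by auto
  have vA: "v \<in> Ar C" "dom C v = cod C c0" "cod C v = cod C d0" using v hom_iff by auto
  obtain w where w: "w \<in> hom C (cod C d0) M" "comp C w d0 = k" "comp C w d1 = b"
  proof -
    have "comp C k za = comp C b zb"
      apply (rule ini_uniq[OF cp(1), of _ M]) using k cp(2,3) pod M_def hom_iff by auto
    then show ?thesis using po_univ[OF cp(6), of k M b] that k pod M_def J_def cp(2,3) hom_iff by auto
  qed
  have wA: "w \<in> Ar C" "dom C w = cod C d0" "cod C w = M" using w hom_iff by auto
  have comm: "comp C jj kP = comp C w v"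
  proof (rule cp_uniq[OF cy(1), of _ M])
    show "comp C jj kP \<in> hom C (cod C c0) M" using pod kP cy(3) M_def hom_iff by auto
    show "comp C w v \<in> hom C (cod C c0) M" using wA vA hom_iff by auto
    have "comp C (comp C jj kP) c0 = k" using k_def assoc pod kP c cy(3) by auto
    also have "\<dots> = comp C (comp C w v) c0" using w(2) v(2) assoc wA vA c by auto
    finally show "comp C (comp C jj kP) c0 = comp C (comp C w v) c0" .
    have "comp C (comp C jj kP) c1 = comp C jj j1" using j1_def assoc pod kP c cy(3) by auto
    also have "\<dots> = comp C b u" using pod by simp
    also have "\<dots> = comp C w (comp C d1 u)" using w(3) assoc wA dd u J_def by auto
    also have "\<dots> = comp C (comp C w v) c1" using v(3) assoc wA vA c by auto
    finally show "comp C (comp C jj kP) c1 = comp C (comp C w v) c1" .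
  qed
  have U: "\<forall>E\<in>Ob C. \<forall>p\<in>hom C (cod C kP) E. \<forall>q\<in>hom C (cod C v) E.
        comp C p kP = comp C q v \<longrightarrow>
        (\<exists>!r. r \<in> hom C (cod C jj) E \<and> comp C r jj = p \<and> comp C r w = q)"
  proof (intro ballI impI)
    fix E p q assume pq: "E \<in> Ob C" "p \<in> hom C (cod C kP) E" "q \<in> hom C (cod C v) E" "comp C p kP = comp C q v"
    have pA: "p \<in> Ar C" "dom C p = cod C kP" "cod C p = E" using pq hom_iff by auto
    have qA: "q \<in> Ar C" "dom C q = cod C d0" "cod C q = E" using pq vA hom_iff by auto
    have "\<exists>r. r \<in> hom C (cod C jj) E \<and> comp C r jj = p \<and> comp C r b = comp C q d1"
    proof (rule po_univ[OF po])
      show "p \<in> hom C (cod C j1) E" using pq j1 by simp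
      show "comp C q d1 \<in> hom C (cod C u) E" using qA dd J_def hom_iff by auto
      have "comp C p j1 = comp C (comp C p kP) c1" using j1_def assoc pA kP c cy(3) by auto
      also have "\<dots> = comp C q (comp C v c1)" using pq(4) assoc qA vA c by auto
      also have "\<dots> = comp C (comp C q d1) u" using v(3) assoc qA dd u J_def by auto
      finally show "comp C p j1 = comp C (comp C q d1) u" .
    qed
    then obtain r0 where r0: "r0 \<in> hom C (cod C jj) E" "comp C r0 jj = p" "comp C r0 b = comp C q d1" by blast
    have r0A: "r0 \<in> Ar C" "dom C r0 = M" "cod C r0 = E" using r0 pod M_def hom_iff by auto
    have r0w: "comp C r0 w = q"
    proof (rule po_uniq[OF cp(6), of _ E])
      show "comp C r0 w \<in> hom C (cod C d0) E" using r0A wA hom_iff by auto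
      show "q \<in> hom C (cod C d0) E" using qA hom_iff by auto
      have "comp C (comp C r0 w) d0 = comp C r0 k" using w(2) assoc r0A wA dd by auto
      also have "\<dots> = comp C (comp C r0 jj) (comp C kP c0)" unfolding k_def using assoc r0A pod kP c cy(3) M_def by auto
      also have "\<dots> = comp C (comp C p kP) c0" using r0(2) assoc pA kP c cy(3) by auto
      also have "\<dots> = comp C q (comp C v c0)" using pq(4) assoc qA vA c by auto
      also have "\<dots> = comp C q d0" using v(2) by simp
      finally show "comp C (comp C r0 w) d0 = comp C q d0" .
      have "comp C (comp C r0 w) d1 = comp C r0 b" using w(3) assoc r0A wA dd by auto
      also have "\<dots> = comp C q d1" using r0(3) .
      finally show "comp C (comp C r0 w) d1 = comp C q d1" .
    qed
    show "\<exists>!r. r \<in> hom C (cod C jj) E \<and> comp C r jj = p \<and> comp C r w = q"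
    proof (rule ex1I[of _ r0])
      show "r0 \<in> hom C (cod C jj) E \<and> comp C r0 jj = p \<and> comp C r0 w = q" using r0 r0w by blast
      fix r' assume r': "r' \<in> hom C (cod C jj) E \<and> comp C r' jj = p \<and> comp C r' w = q"
      have r'A: "r' \<in> Ar C" "dom C r' = M" "cod C r' = E" using r' pod M_def hom_iff by auto
      show "r' = r0"
      proof (rule po_uniq[OF po, of _ E])
        show "r' \<in> hom C (cod C jj) E" using r' by blast
        show "r0 \<in> hom C (cod C jj) E" using r0 by blast
        show "comp C r' jj = comp C r0 jj" using r' r0 by simp
        have "comp C r' b = comp C (comp C r' w) d1" using w(3) assoc r'A wA dd by auto
        also have "\<dots> = comp C r0 b" using r' r0(3) by simp
        finally show "comp C r' b = comp C r0 b" .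
      qed
    qed
  qed
  have e1: "dom C kP = dom C v" using cy(3) vA by simp
  have e2: "dom C jj = cod C kP" using pod by simp
  have e3: "dom C w = cod C v" using wA vA by simp
  have e4: "cod C jj = cod C w" using wA pod M_def by simp
  have "is_pushout C kP v jj w" unfolding is_pushout_def
    apply (intro conjI) by (rule U comm kP vA(1) pod(1) wA(1) e1 e2 e3 e4)+
  hence wcof: "w \<in> cof C" by (rule po_cof[OF cy(2)])
  have "cod C d0 = dom C w" using wA by simp
  hence "comp C w d0 \<in> cof C" by (rule cof_comp[OF cp(7) wcof])
  hence kcof: "k \<in> cof C" using w(2) by simp
  have f1: "dom C k = dom C u" using k(2) unfolding P_def .
  have f2: "dom C b = cod C u" using pod(4) unfolding J_def .
  have f3: "cod C b = cod C k" using k(3) unfolding M_def by (rule sym)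
  have f4: "r \<in> hom C (cod C k) (cod C u)" using r(1) unfolding k(3) J_def .
  have f5: "comp C r b = idm C (cod C u)" using r(3) unfolding J_def .
  show ?thesis
    apply (rule exI[of _ k], rule exI[of _ b], rule exI[of _ r])
    apply (intro conjI)
    apply (fact kcof) apply (fact f1) apply (fact bt(1)) apply (fact bt(2)) apply (fact f2)
    apply (fact f3) apply (fact f4) apply (fact f5) by (fact rk)
qed

lemma relcyl: assumes i: "i \<in> cof C" and po: "is_pushout C i i in0 in1"
  and u: "u \<in> Ar C" "dom C u = cod C in0"
  and q: "q \<in> we C" "dom C q = cod C u" "cod C q = cod C i"
  and e0: "comp C q (comp C u in0) = idm C (cod C i)"
  and e1: "comp C q (comp C u in1) = idm C (cod C i)"
  shows "\<exists>k p r. rel_cylinder C i in0 in1 k p \<and> r \<in> hom C (cod C k) (cod C u) \<and> comp C r k = u"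
proof -
  obtain k b r where m: "k \<in> cof C" "dom C k = dom C u" "b \<in> cof C" "b \<in> we C" "dom C b = cod C u"
     "cod C b = cod C k" "r \<in> hom C (cod C k) (cod C u)" "comp C r b = idm C (cod C u)" "comp C r k = u"
    using mapcyl[OF u(1)] by blast
  have pd: "in0 \<in> Ar C" "in1 \<in> Ar C" "dom C in0 = cod C i" "dom C in1 = cod C i" "cod C in0 = cod C in1"
    using po_data[OF po] by auto
  have kA: "k \<in> Ar C" using m cof_ar by auto
  have bA: "b \<in> Ar C" using m cof_ar by auto
  have rA: "r \<in> Ar C" "dom C r = cod C k" "cod C r = cod C u" using m(7) hom_iff by auto
  have qA: "q \<in> Ar C" using q we_ar by auto
  have uO: "cod C u \<in> Ob C" using ar_ob u by auto
  have rwe: "r \<in> we C"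
    apply (rule we_left[OF rA(1) m(4)]) using rA m id_we uO by auto
  define p where "p = comp C q r"
  have pwe: "p \<in> we C" unfolding p_def by (rule we_comp[OF rwe q(1)]) (use rA q in simp)
  have ph: "p \<in> hom C (cod C k) (cod C i)" unfolding p_def hom_iff using rA qA q by auto
  have "comp C p (comp C k in0) = comp C q (comp C (comp C r k) in0)"
    unfolding p_def using assoc rA qA q kA pd m u by auto
  hence p0: "comp C p (comp C k in0) = idm C (cod C i)" using m(9) e0 by simp
  have "comp C p (comp C k in1) = comp C q (comp C (comp C r k) in1)"
    unfolding p_def using assoc rA qA q kA pd m u by auto
  hence p1: "comp C p (comp C k in1) = idm C (cod C i)" using m(9) e1 by simp
  have dk: "dom C k = cod C in0" using m(2) u(2) by simp
  have "rel_cylinder C i in0 in1 k p" unfolding rel_cylinder_def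
    apply (intro conjI)
    apply (fact i) apply (fact po) apply (fact m(1)) apply (fact dk) apply (fact pwe) apply (fact ph)
    apply (fact p0) by (fact p1)
  thus ?thesis using m(7,9) by blast
qed

end

locale psh = cc +
  fixes Xo :: "'o \<Rightarrow> 'x set" and Xm :: "'m \<Rightarrow> 'x \<Rightarrow> 'x"
  assumes psh: "is_presheaf C Xo Xm"
begin

lemmas ps1 = psh[unfolded is_presheaf_def, THEN conjunct1]
lemmas ps2 = psh[unfolded is_presheaf_def, THEN conjunct2, THEN conjunct1]
lemmas ps3 = psh[unfolded is_presheaf_def, THEN conjunct2, THEN conjunct2, THEN conjunct1]
lemmas ps5 = psh[unfolded is_presheaf_def, THEN conjunct2, THEN conjunct2, THEN conjunct2, THEN conjunct2]

lemma Xin: "u \<in> Ar C \<Longrightarrow> x \<in> Xo (cod C u) \<Longrightarrow> Xm u x \<in> Xo (dom C u)"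
  using ps1 by blast

lemma Xid: "a \<in> Ob C \<Longrightarrow> x \<in> Xo a \<Longrightarrow> Xm (idm C a) x = x"
  using ps2 by blast

lemma Xcomp: "u \<in> Ar C \<Longrightarrow> v \<in> Ar C \<Longrightarrow> cod C u = dom C v \<Longrightarrow> x \<in> Xo (cod C v) \<Longrightarrow>
   Xm (comp C v u) x = Xm u (Xm v x)"
  using ps3 by blast

lemma Xpb: "i \<in> cof C \<Longrightarrow> is_pushout C i g j k \<Longrightarrow>
   bij_betw (\<lambda>d. (Xm j d, Xm k d)) (Xo (cod C j))
          {(b, c). b \<in> Xo (cod C i) \<and> c \<in> Xo (cod C g) \<and> Xm i b = Xm g c}"
  using ps5 by blast

lemma glue: assumes "i \<in> cof C" "is_pushout C i g j k" "b \<in> Xo (cod C i)" "c \<in> Xo (cod C g)" "Xm i b = Xm g c"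
  shows "\<exists>d\<in>Xo (cod C j). Xm j d = b \<and> Xm k d = c"
proof -
  have "(b, c) \<in> (\<lambda>d. (Xm j d, Xm k d)) ` Xo (cod C j)"
    using Xpb[OF assms(1,2)] assms(3-5) unfolding bij_betw_def by auto
  thus ?thesis by auto
qed

lemma sep: assumes "i \<in> cof C" "is_pushout C i g j k" "d \<in> Xo (cod C j)" "d' \<in> Xo (cod C j)"
  "Xm j d = Xm j d'" "Xm k d = Xm k d'"
  shows "d = d'"
  using Xpb[OF assms(1,2)] assms(3-6) unfolding bij_betw_def inj_on_def by auto

lemma hrefl: assumes i: "i \<in> cof C" and g: "g \<in> Xo (cod C i)"
  shows "rel_homotopic C Xo Xm i g g"
proof -
  have iA: "i \<in> Ar C" using i cof_ar by auto
  obtain in0 in1 where po: "is_pushout C i i in0 in1" using po_ex[OF i iA] by auto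
  have pd: "in0 \<in> Ar C" "in1 \<in> Ar C" "dom C in0 = cod C i" "dom C in1 = cod C i" "cod C in0 = cod C in1"
    using po_data[OF po] by auto
  have B: "cod C i \<in> Ob C" using ar_ob iA by auto
  obtain nab where nab: "nab \<in> hom C (cod C in0) (cod C i)" "comp C nab in0 = idm C (cod C i)"
    "comp C nab in1 = idm C (cod C i)"
    using po_univ[OF po, of "idm C (cod C i)" "cod C i" "idm C (cod C i)"] B hom_iff by auto
  have nA: "nab \<in> Ar C" "dom C nab = cod C in0" "cod C nab = cod C i" using nab hom_iff by auto
  obtain k p r where c: "rel_cylinder C i in0 in1 k p" "r \<in> hom C (cod C k) (cod C nab)" "comp C r k = nab"
    using relcyl[OF i po nA(1) nA(2) id_we[OF B]] nA nab B pd by auto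
  have kA: "k \<in> Ar C" "dom C k = cod C in0" using c(1) cof_ar unfolding rel_cylinder_def by auto
  have rA: "r \<in> Ar C" "dom C r = cod C k" "cod C r = cod C i" using c(2) nA hom_iff by auto
  define h where "h = Xm r g"
  have h: "h \<in> Xo (cod C k)" unfolding h_def using Xin[OF rA(1)] rA g by auto
  have "Xm (comp C k in0) h = Xm (comp C r (comp C k in0)) g"
    unfolding h_def using Xcomp rA kA pd g by auto
  also have "\<dots> = Xm (comp C nab in0) g" using assoc[of in0 k r] rA kA pd c(3) by auto
  also have "\<dots> = g" using nab(2) Xid B g by simp
  finally have h0: "Xm (comp C k in0) h = g" .
  have "Xm (comp C k in1) h = Xm (comp C r (comp C k in1)) g"
    unfolding h_def using Xcomp rA kA pd g by auto
  also have "\<dots> = Xm (comp C nab in1) g" using assoc[of in1 k r] rA kA pd c(3) by auto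
  also have "\<dots> = g" using nab(3) Xid B g by simp
  finally have h1: "Xm (comp C k in1) h = g" .
  show ?thesis unfolding rel_homotopic_def using c(1) h h0 h1 by blast
qed

lemma hsym: assumes "rel_homotopic C Xo Xm i g g'" shows "rel_homotopic C Xo Xm i g' g"
proof -
  obtain in0 in1 k p h where c: "rel_cylinder C i in0 in1 k p" "h \<in> Xo (cod C k)"
    "Xm (comp C k in0) h = g" "Xm (comp C k in1) h = g'"
    using assms unfolding rel_homotopic_def by blast
  have po: "is_pushout C i i in0 in1" using c(1) unfolding rel_cylinder_def by blast
  have "rel_cylinder C i in1 in0 k p" using c(1) po_sym[OF po] po_data(8)[OF po]
    unfolding rel_cylinder_def by auto
  thus ?thesis unfolding rel_homotopic_def using c by blast
qed

lemma hdata: assumes "rel_homotopic C Xo Xm i g g'"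
  shows "g \<in> Xo (cod C i)" "g' \<in> Xo (cod C i)" "Xm i g = Xm i g'"
proof -
  obtain in0 in1 k p h where c: "rel_cylinder C i in0 in1 k p" "h \<in> Xo (cod C k)"
    "Xm (comp C k in0) h = g" "Xm (comp C k in1) h = g'"
    using assms unfolding rel_homotopic_def by blast
  have po: "is_pushout C i i in0 in1" and k: "k \<in> cof C" "dom C k = cod C in0"
    using c(1) unfolding rel_cylinder_def by blast+
  note pd = po_data[OF po]
  have kA: "k \<in> Ar C" using k cof_ar by auto
  show "g \<in> Xo (cod C i)" using c(3) Xin[of "comp C k in0" h] pd kA k c(2) by auto
  show "g' \<in> Xo (cod C i)" using c(4) Xin[of "comp C k in1" h] pd kA k c(2) by auto
  have "Xm i g = Xm (comp C (comp C k in0) i) h" using c(3) Xcomp pd kA k c(2) by auto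
  also have "\<dots> = Xm (comp C k (comp C in0 i)) h" using assoc pd kA k by auto
  also have "\<dots> = Xm (comp C k (comp C in1 i)) h" using pd by simp
  also have "\<dots> = Xm (comp C (comp C k in1) i) h" using assoc pd kA k by auto
  also have "\<dots> = Xm i g'" using c(4) Xcomp pd kA k c(2) by auto
  finally show "Xm i g = Xm i g'" .
qed

lemma htrans: assumes H1: "rel_homotopic C Xo Xm i g g'" and H2: "rel_homotopic C Xo Xm i g' g''"
  shows "rel_homotopic C Xo Xm i g g''"
proof -
  obtain in0 in1 k p h where c: "rel_cylinder C i in0 in1 k p" "h \<in> Xo (cod C k)"
    "Xm (comp C k in0) h = g" "Xm (comp C k in1) h = g'"
    using H1 unfolding rel_homotopic_def by blast
  obtain in0' in1' k' p' h' where c': "rel_cylinder C i in0' in1' k' p'" "h' \<in> Xo (cod C k')"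
    "Xm (comp C k' in0') h' = g'" "Xm (comp C k' in1') h' = g''"
    using H2 unfolding rel_homotopic_def by blast
  have i: "i \<in> cof C" and po: "is_pushout C i i in0 in1" and kc: "k \<in> cof C" "dom C k = cod C in0"
    and pw: "p \<in> we C" "p \<in> hom C (cod C k) (cod C i)"
    and pe: "comp C p (comp C k in0) = idm C (cod C i)" "comp C p (comp C k in1) = idm C (cod C i)"
    using c(1) unfolding rel_cylinder_def by blast+
  have po': "is_pushout C i i in0' in1'" and kc': "k' \<in> cof C" "dom C k' = cod C in0'"
    and pw': "p' \<in> we C" "p' \<in> hom C (cod C k') (cod C i)"
    and pe': "comp C p' (comp C k' in0') = idm C (cod C i)" "comp C p' (comp C k' in1') = idm C (cod C i)"
    using c'(1) unfolding rel_cylinder_def by blast+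
  note pd = po_data[OF po] and pd' = po_data[OF po']
  have iA: "i \<in> Ar C" using i cof_ar by auto
  have B: "cod C i \<in> Ob C" using ar_ob iA by auto
  have kA: "k \<in> Ar C" "k' \<in> Ar C" using kc kc' cof_ar by auto
  have pA: "p \<in> Ar C" "dom C p = cod C k" "cod C p = cod C i" using pw hom_iff by auto
  have pA': "p' \<in> Ar C" "dom C p' = cod C k'" "cod C p' = cod C i" using pw' hom_iff by auto
  define e1 where "e1 = comp C k in1"
  define e0' where "e0' = comp C k' in0'"
  have e1A: "e1 \<in> Ar C" "dom C e1 = cod C i" "cod C e1 = cod C k" using e1_def kA kc pd by auto
  have e0A: "e0' \<in> Ar C" "dom C e0' = cod C i" "cod C e0' = cod C k'" using e0'_def kA kc' pd' by auto
  have in0c': "in0' \<in> cof C" using po_cof[OF i po_sym[OF po']] .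
  have e0c: "e0' \<in> cof C" unfolding e0'_def by (rule cof_comp[OF in0c' kc'(1)]) (use kc' in simp)
  have e0w: "e0' \<in> we C"
    apply (rule we_right[OF pw'(1) e0A(1)]) using pA' e0A pe' e0'_def id_we B by auto
  obtain a' a where J: "is_pushout C e0' e1 a' a" using po_ex[OF e0c e1A(1)] e1A e0A by auto
  note Jd = po_data[OF J]
  have aw: "a \<in> we C" using po_tcof[OF e0c e0w J] by blast
  have aA: "a \<in> Ar C" "a' \<in> Ar C" "dom C a = cod C k" "dom C a' = cod C k'" "cod C a = cod C a'"
    using Jd e1A e0A by auto
  obtain q where q: "q \<in> hom C (cod C a') (cod C i)" "comp C q a' = p'" "comp C q a = p"
  proof -
    have "comp C p' e0' = comp C p e1" using pe pe' e0'_def e1_def by simp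
    thus ?thesis using po_univ[OF J, of p' "cod C i" p] that pA pA' e0A e1A hom_iff by auto
  qed
  have qA: "q \<in> Ar C" "dom C q = cod C a'" "cod C q = cod C i" using q hom_iff by auto
  have qw: "q \<in> we C" apply (rule we_left[OF qA(1) aw]) using q pw aA qA by auto
  define u0 where "u0 = comp C a (comp C k in0)"
  define u1 where "u1 = comp C a' (comp C k' in1')"
  have u0A: "u0 \<in> Ar C" "dom C u0 = cod C i" "cod C u0 = cod C a'" using u0_def aA kA kc pd by auto
  have u1A: "u1 \<in> Ar C" "dom C u1 = cod C i" "cod C u1 = cod C a'" using u1_def aA kA kc' pd' by auto
  obtain u where u: "u \<in> hom C (cod C in0) (cod C a')" "comp C u in0 = u0" "comp C u in1 = u1"
  proof -
    have "comp C u0 i = comp C a (comp C k (comp C in0 i))" unfolding u0_def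
      using assoc aA kA kc pd iA by auto
    also have "\<dots> = comp C a (comp C e1 i)" unfolding e1_def using pd(9) assoc kA kc pd iA by auto
    also have "\<dots> = comp C (comp C a e1) i" using assoc aA e1A iA by auto
    also have "\<dots> = comp C (comp C a' e0') i" using Jd(9) by simp
    also have "\<dots> = comp C a' (comp C k' (comp C in0' i))" unfolding e0'_def
      using assoc aA kA kc' pd' iA by auto
    also have "\<dots> = comp C a' (comp C k' (comp C in1' i))" using pd'(9) by simp
    also have "\<dots> = comp C u1 i" unfolding u1_def using assoc aA kA kc' pd' iA by auto
    finally have "comp C u0 i = comp C u1 i" .
    thus ?thesis using po_univ[OF po, of u0 "cod C a'" u1] that u0A u1A hom_iff by auto
  qed
  have uA: "u \<in> Ar C" "dom C u = cod C in0" "cod C u = cod C a'" using u hom_iff by auto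
  have qu0: "comp C q (comp C u in0) = idm C (cod C i)"
  proof -
    have "comp C q (comp C u in0) = comp C (comp C q a) (comp C k in0)"
      using u(2) u0_def assoc qA aA kA kc pd by auto
    thus ?thesis using q(3) pe by simp
  qed
  have qu1: "comp C q (comp C u in1) = idm C (cod C i)"
  proof -
    have "comp C q (comp C u in1) = comp C (comp C q a') (comp C k' in1')"
      using u(3) u1_def assoc qA aA kA kc' pd' by auto
    thus ?thesis using q(2) pe' by simp
  qed
  obtain z where z: "z \<in> Xo (cod C a')" "Xm a' z = h'" "Xm a z = h"
  proof -
    have "Xm e0' h' = Xm e1 h" using c(4) c'(3) e0'_def e1_def by simp
    thus ?thesis using glue[OF e0c J, of h' h] that c(2) c'(2) e0A e1A by auto
  qed
  obtain k'' p'' r where cc: "rel_cylinder C i in0 in1 k'' p''" "r \<in> hom C (cod C k'') (cod C u)" "comp C r k'' = u"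
    using relcyl[OF i po uA(1) uA(2) qw] qA uA qu0 qu1 by auto
  have k''c: "k'' \<in> cof C" "dom C k'' = cod C in0" using cc(1) unfolding rel_cylinder_def by blast+
  have k''A: "k'' \<in> Ar C" using k''c cof_ar by auto
  have rA: "r \<in> Ar C" "dom C r = cod C k''" "cod C r = cod C a'" using cc(2) uA hom_iff by auto
  define H where "H = Xm r z"
  have H: "H \<in> Xo (cod C k'')" unfolding H_def using Xin[OF rA(1)] rA z by auto
  have "Xm (comp C k'' in0) H = Xm (comp C r (comp C k'' in0)) z"
    unfolding H_def using Xcomp rA k''A k''c pd z by auto
  also have "\<dots> = Xm u0 z" using assoc[of in0 k'' r] rA k''A k''c pd cc(3) u(2) by auto
  also have "\<dots> = Xm (comp C k in0) (Xm a z)" unfolding u0_def using Xcomp aA kA kc pd z by auto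
  also have "\<dots> = g" using z(3) c(3) by simp
  finally have H0: "Xm (comp C k'' in0) H = g" .
  have "Xm (comp C k'' in1) H = Xm (comp C r (comp C k'' in1)) z"
    unfolding H_def using Xcomp rA k''A k''c pd z by auto
  also have "\<dots> = Xm u1 z" using assoc[of in1 k'' r] rA k''A k''c pd cc(3) u(3) by auto
  also have "\<dots> = Xm (comp C k' in1') (Xm a' z)" unfolding u1_def using Xcomp aA kA kc' pd' z by auto
  also have "\<dots> = g''" using z(2) c'(4) by simp
  finally have H1: "Xm (comp C k'' in1) H = g''" .
  show ?thesis unfolding rel_homotopic_def using cc(1) H H0 H1 by blast
qed

lemma rel_iff: "(g, g') \<in> pi_rel C Xo Xm i x \<longleftrightarrow>
   g \<in> pi_fib C Xo Xm i x \<and> g' \<in> pi_fib C Xo Xm i x \<and> rel_homotopic C Xo Xm i g g'"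
  unfolding pi_rel_def by blast

lemma fib_iff: "g \<in> pi_fib C Xo Xm i x \<longleftrightarrow> g \<in> Xo (cod C i) \<and> Xm i g = x"
  unfolding pi_fib_def by blast

lemma equiv_rel: assumes "i \<in> cof C" shows "equiv (pi_fib C Xo Xm i x) (pi_rel C Xo Xm i x)"
  unfolding equiv_def refl_on_def sym_def trans_def
  apply (intro conjI)
  subgoal unfolding pi_rel_def by blast
  subgoal using hrefl[OF assms] by (auto simp: rel_iff fib_iff)
  subgoal using hsym unfolding rel_iff by blast
  subgoal using htrans unfolding rel_iff by blast
  done

end

locale two = X: psh C Xo Xm + Y: psh C Yo Ym
  for C :: "('o, 'm) cylcat" and Xo :: "'o \<Rightarrow> 'x set" and Xm and Yo :: "'o \<Rightarrow> 'y set" and Ym +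
  fixes f :: "'o \<Rightarrow> 'x \<Rightarrow> 'y"
  assumes mor: "psh_mor C Xo Xm Yo Ym f"
begin

lemma fin: "a \<in> Ob C \<Longrightarrow> x \<in> Xo a \<Longrightarrow> f a x \<in> Yo a"
  using mor unfolding psh_mor_def by blast

lemma fnat: "u \<in> Ar C \<Longrightarrow> x \<in> Xo (cod C u) \<Longrightarrow> f (dom C u) (Xm u x) = Ym u (f (cod C u) x)"
  using mor unfolding psh_mor_def by blast

lemma fhom: assumes "rel_homotopic C Xo Xm i g g'"
  shows "rel_homotopic C Yo Ym i (f (cod C i) g) (f (cod C i) g')"
proof -
  obtain in0 in1 k p h where c: "rel_cylinder C i in0 in1 k p" "h \<in> Xo (cod C k)"
    "Xm (comp C k in0) h = g" "Xm (comp C k in1) h = g'"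
    using assms unfolding rel_homotopic_def by blast
  have po: "is_pushout C i i in0 in1" and k: "k \<in> cof C" "dom C k = cod C in0"
    using c(1) unfolding rel_cylinder_def by blast+
  note pd = X.po_data[OF po]
  have kA: "k \<in> Ar C" using k X.cof_ar by auto
  have ob: "cod C k \<in> Ob C" using X.ar_ob kA by auto
  have h: "f (cod C k) h \<in> Yo (cod C k)" using fin ob c(2) by auto
  have "Ym (comp C k in0) (f (cod C k) h) = f (cod C i) g"
    using fnat[of "comp C k in0" h] c(2,3) pd kA k by auto
  moreover have "Ym (comp C k in1) (f (cod C k) h) = f (cod C i) g'"
    using fnat[of "comp C k in1" h] c(2,4) pd kA k by auto
  ultimately show ?thesis unfolding rel_homotopic_def using c(1) h by blast
qed

lemma ffib: assumes "i \<in> Ar C" "g \<in> pi_fib C Xo Xm i x"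
  shows "f (cod C i) g \<in> pi_fib C Yo Ym i (f (dom C i) x)"
  using assms fin fnat X.ar_ob unfolding pi_fib_def by auto

lemma pimap_class: assumes i: "i \<in> cof C" and g: "g \<in> pi_fib C Xo Xm i x"
  shows "pi_map C Yo Ym f i x (pi_rel C Xo Xm i x `` {g}) = pi_rel C Yo Ym i (f (dom C i) x) `` {f (cod C i) g}"
proof -
  have iA: "i \<in> Ar C" using i X.cof_ar by auto
  note EX = X.equiv_rel[OF i, of x] and EY = Y.equiv_rel[OF i, of "f (dom C i) x"]
  have fg: "f (cod C i) g \<in> pi_fib C Yo Ym i (f (dom C i) x)" using ffib[OF iA g] .
  show ?thesis unfolding pi_map_def
  proof
    show "pi_rel C Yo Ym i (f (dom C i) x) `` (f (cod C i) ` (pi_rel C Xo Xm i x `` {g}))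
      \<subseteq> pi_rel C Yo Ym i (f (dom C i) x) `` {f (cod C i) g}"
    proof
      fix y assume "y \<in> pi_rel C Yo Ym i (f (dom C i) x) `` (f (cod C i) ` (pi_rel C Xo Xm i x `` {g}))"
      then obtain s where s: "(g, s) \<in> pi_rel C Xo Xm i x" "(f (cod C i) s, y) \<in> pi_rel C Yo Ym i (f (dom C i) x)"
        by blast
      have "(f (cod C i) g, f (cod C i) s) \<in> pi_rel C Yo Ym i (f (dom C i) x)"
        using s(1) fhom ffib[OF iA] unfolding X.rel_iff Y.rel_iff by blast
      hence "(f (cod C i) g, y) \<in> pi_rel C Yo Ym i (f (dom C i) x)"
        using s(2) EY unfolding equiv_def trans_def by blast
      thus "y \<in> pi_rel C Yo Ym i (f (dom C i) x) `` {f (cod C i) g}" by blast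
    qed
    have "g \<in> pi_rel C Xo Xm i x `` {g}" using equiv_class_self[OF EX g] .
    thus "pi_rel C Yo Ym i (f (dom C i) x) `` {f (cod C i) g} \<subseteq>
      pi_rel C Yo Ym i (f (dom C i) x) `` (f (cod C i) ` (pi_rel C Xo Xm i x `` {g}))" by blast
  qed
qed

lemma surj_inj: assumes S: "(\<forall>i\<in>cof C. \<forall>x\<in>Xo (dom C i).
             pi_map C Yo Ym f i x ` pi_set C Xo Xm i x = pi_set C Yo Ym i (f (dom C i) x))" and i: "i \<in> cof C" and x: "x \<in> Xo (dom C i)"
  shows "inj_on (pi_map C Yo Ym f i x) (pi_set C Xo Xm i x)"
proof (rule inj_onI)
  fix S1 S2 assume S1: "S1 \<in> pi_set C Xo Xm i x" and S2: "S2 \<in> pi_set C Xo Xm i x"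
    and eq: "pi_map C Yo Ym f i x S1 = pi_map C Yo Ym f i x S2"
  have iA: "i \<in> Ar C" using i X.cof_ar by auto
  note EX = X.equiv_rel[OF i, of x] and EY = Y.equiv_rel[OF i, of "f (dom C i) x"]
  obtain g1 where g1: "g1 \<in> pi_fib C Xo Xm i x" "S1 = pi_rel C Xo Xm i x `` {g1}"
    using S1 unfolding pi_set_def by (auto elim: quotientE)
  obtain g2 where g2: "g2 \<in> pi_fib C Xo Xm i x" "S2 = pi_rel C Xo Xm i x `` {g2}"
    using S2 unfolding pi_set_def by (auto elim: quotientE)
  have "pi_rel C Yo Ym i (f (dom C i) x) `` {f (cod C i) g1} = pi_rel C Yo Ym i (f (dom C i) x) `` {f (cod C i) g2}"
    using eq pimap_class[OF i g1(1)] pimap_class[OF i g2(1)] g1 g2 by simp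
  hence "(f (cod C i) g1, f (cod C i) g2) \<in> pi_rel C Yo Ym i (f (dom C i) x)"
    using eq_equiv_class_iff[OF EY] ffib[OF iA g1(1)] ffib[OF iA g2(1)] by blast
  hence "rel_homotopic C Yo Ym i (f (cod C i) g1) (f (cod C i) g2)" unfolding Y.rel_iff by blast
  then obtain in0 in1 k p h where c: "rel_cylinder C i in0 in1 k p" "h \<in> Yo (cod C k)"
    "Ym (comp C k in0) h = f (cod C i) g1" "Ym (comp C k in1) h = f (cod C i) g2"
    unfolding rel_homotopic_def by blast
  have po: "is_pushout C i i in0 in1" and k: "k \<in> cof C" "dom C k = cod C in0"
    using c(1) unfolding rel_cylinder_def by blast+
  note pd = X.po_data[OF po]
  have kA: "k \<in> Ar C" using k X.cof_ar by auto
  have g1': "g1 \<in> Xo (cod C i)" "Xm i g1 = x" and g2': "g2 \<in> Xo (cod C i)" "Xm i g2 = x"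
    using g1(1) g2(1) unfolding X.fib_iff by auto
  obtain y where y: "y \<in> Xo (cod C in0)" "Xm in0 y = g1" "Xm in1 y = g2"
    using X.glue[OF i po g1'(1) g2'(1)] g1' g2' by auto
  have yk: "y \<in> Xo (dom C k)" using y k by simp
  have obk: "dom C k \<in> Ob C" using X.ar_ob kA by auto
  have hk: "Ym k h \<in> Yo (cod C in0)" using Y.Xin[OF kA] c(2) k by auto
  have fy: "f (dom C k) y \<in> Yo (cod C in0)" using fin[OF obk yk] k by simp
  have "Ym k h = f (dom C k) y"
  proof (rule Y.sep[OF i po hk fy])
    have "Ym in0 (Ym k h) = f (cod C i) g1" using Y.Xcomp[of in0 k h] c(2,3) pd kA k by auto
    also have "\<dots> = Ym in0 (f (dom C k) y)" using fnat[of in0 y] y pd k by auto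
    finally show "Ym in0 (Ym k h) = Ym in0 (f (dom C k) y)" .
    have "Ym in1 (Ym k h) = f (cod C i) g2" using Y.Xcomp[of in1 k h] c(2,4) pd kA k by auto
    also have "\<dots> = Ym in1 (f (dom C k) y)" using fnat[of in1 y] y pd k by auto
    finally show "Ym in1 (Ym k h) = Ym in1 (f (dom C k) y)" .
  qed
  hence "h \<in> pi_fib C Yo Ym k (f (dom C k) y)" using c(2) unfolding Y.fib_iff by simp
  hence "pi_rel C Yo Ym k (f (dom C k) y) `` {h} \<in> pi_set C Yo Ym k (f (dom C k) y)"
    unfolding pi_set_def by (rule quotientI)
  hence "pi_set C Xo Xm k y \<noteq> {}" using S k(1) yk by force
  then obtain G where G: "G \<in> Xo (cod C k)" "Xm k G = y"
    unfolding pi_set_def quotient_def X.fib_iff pi_fib_def by blast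
  have "Xm (comp C k in0) G = g1" using X.Xcomp[of in0 k G] G y pd kA k by auto
  moreover have "Xm (comp C k in1) G = g2" using X.Xcomp[of in1 k G] G y pd kA k by auto
  ultimately have "rel_homotopic C Xo Xm i g1 g2" unfolding rel_homotopic_def using c(1) G(1) by blast
  hence "(g1, g2) \<in> pi_rel C Xo Xm i x" using g1 g2 unfolding X.rel_iff by blast
  thus "S1 = S2" using g1 g2 equiv_class_eq[OF EX] by simp
qed

lemma surj_weq: assumes S: "(\<forall>i\<in>cof C. \<forall>x\<in>Xo (dom C i).
             pi_map C Yo Ym f i x ` pi_set C Xo Xm i x = pi_set C Yo Ym i (f (dom C i) x))" shows "psh_weq C Xo Xm Yo Ym f"
  unfolding psh_weq_def
proof (intro ballI impI)
  fix i u w assume i: "i \<in> cof C" and u: "u \<in> Xo (dom C i)" and w: "w \<in> Yo (cod C i)"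
    and e: "f (dom C i) u = Ym i w"
  have wf: "w \<in> pi_fib C Yo Ym i (f (dom C i) u)" using w e unfolding Y.fib_iff by simp
  hence "pi_rel C Yo Ym i (f (dom C i) u) `` {w} \<in> pi_set C Yo Ym i (f (dom C i) u)"
    unfolding pi_set_def by (rule quotientI)
  then obtain T where T: "T \<in> pi_set C Xo Xm i u" "pi_map C Yo Ym f i u T = pi_rel C Yo Ym i (f (dom C i) u) `` {w}"
    using S i u by (metis imageE)
  obtain a where a: "a \<in> pi_fib C Xo Xm i u" "T = pi_rel C Xo Xm i u `` {a}"
    using T(1) unfolding pi_set_def by (auto elim: quotientE)
  note EY = Y.equiv_rel[OF i, of "f (dom C i) u"]
  have iA: "i \<in> Ar C" using i X.cof_ar by auto
  have "pi_rel C Yo Ym i (f (dom C i) u) `` {f (cod C i) a} = pi_rel C Yo Ym i (f (dom C i) u) `` {w}"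
    using T(2) pimap_class[OF i a(1)] a(2) by simp
  hence "(f (cod C i) a, w) \<in> pi_rel C Yo Ym i (f (dom C i) u)"
    using eq_equiv_class_iff[OF EY] ffib[OF iA a(1)] wf by blast
  hence hr: "rel_homotopic C Yo Ym i (f (cod C i) a) w" unfolding Y.rel_iff by blast
  have "a \<in> Xo (cod C i)" "Xm i a = u" using a(1) unfolding X.fib_iff by auto
  thus "\<exists>a\<in>Xo (cod C i). Xm i a = u \<and>
          (\<exists>in0 in1 k p h. rel_cylinder C i in0 in1 k p \<and> h \<in> Yo (cod C k) \<and>
             Ym (comp C k in0) h = f (cod C i) a \<and> Ym (comp C k in1) h = w)"
    using hr unfolding rel_homotopic_def by blast
qed

lemma weq_surj: assumes W: "psh_weq C Xo Xm Yo Ym f" shows "(\<forall>i\<in>cof C. \<forall>x\<in>Xo (dom C i).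
             pi_map C Yo Ym f i x ` pi_set C Xo Xm i x = pi_set C Yo Ym i (f (dom C i) x))"
proof (intro ballI)
  fix i x assume i: "i \<in> cof C" and x: "x \<in> Xo (dom C i)"
  have iA: "i \<in> Ar C" using i X.cof_ar by auto
  note EY = Y.equiv_rel[OF i, of "f (dom C i) x"]
  show "pi_map C Yo Ym f i x ` pi_set C Xo Xm i x = pi_set C Yo Ym i (f (dom C i) x)"
  proof
    show "pi_map C Yo Ym f i x ` pi_set C Xo Xm i x \<subseteq> pi_set C Yo Ym i (f (dom C i) x)"
    proof
      fix T assume "T \<in> pi_map C Yo Ym f i x ` pi_set C Xo Xm i x"
      then obtain S where S: "S \<in> pi_set C Xo Xm i x" "T = pi_map C Yo Ym f i x S" by blast
      obtain g where g: "g \<in> pi_fib C Xo Xm i x" "S = pi_rel C Xo Xm i x `` {g}"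
        using S(1) unfolding pi_set_def by (auto elim: quotientE)
      have "T = pi_rel C Yo Ym i (f (dom C i) x) `` {f (cod C i) g}" using S(2) g pimap_class[OF i g(1)] by simp
      thus "T \<in> pi_set C Yo Ym i (f (dom C i) x)" unfolding pi_set_def using ffib[OF iA g(1)] quotientI by metis
    qed
    show "pi_set C Yo Ym i (f (dom C i) x) \<subseteq> pi_map C Yo Ym f i x ` pi_set C Xo Xm i x"
    proof
      fix T assume "T \<in> pi_set C Yo Ym i (f (dom C i) x)"
      then obtain w where w: "w \<in> pi_fib C Yo Ym i (f (dom C i) x)" "T = pi_rel C Yo Ym i (f (dom C i) x) `` {w}"
        unfolding pi_set_def by (auto elim: quotientE)
      have w': "w \<in> Yo (cod C i)" "Ym i w = f (dom C i) x" using w(1) unfolding Y.fib_iff by auto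
      obtain a where a: "a \<in> Xo (cod C i)" "Xm i a = x" and
        hr: "\<exists>in0 in1 k p h. rel_cylinder C i in0 in1 k p \<and> h \<in> Yo (cod C k) \<and>
             Ym (comp C k in0) h = f (cod C i) a \<and> Ym (comp C k in1) h = w"
        using W i x w' unfolding psh_weq_def by metis
      have af: "a \<in> pi_fib C Xo Xm i x" using a unfolding X.fib_iff by simp
      have "(f (cod C i) a, w) \<in> pi_rel C Yo Ym i (f (dom C i) x)"
        using hr ffib[OF iA af] w(1) unfolding Y.rel_iff rel_homotopic_def by blast
      hence "T = pi_map C Yo Ym f i x (pi_rel C Xo Xm i x `` {a})"
        using pimap_class[OF i af] w(2) equiv_class_eq[OF EY] by simp
      moreover have "pi_rel C Xo Xm i x `` {a} \<in> pi_set C Xo Xm i x"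
        unfolding pi_set_def using af by (rule quotientI)
      ultimately show "T \<in> pi_map C Yo Ym f i x ` pi_set C Xo Xm i x" by blast
    qed
  qed
qed


end

theorem mainTheorem6:
  fixes C :: "('o, 'm) cylcat"
    and Xo :: "'o \<Rightarrow> 'x set" and Xm :: "'m \<Rightarrow> 'x \<Rightarrow> 'x"
    and Yo :: "'o \<Rightarrow> 'y set" and Ym :: "'m \<Rightarrow> 'y \<Rightarrow> 'y"
    and f :: "'o \<Rightarrow> 'x \<Rightarrow> 'y"
  assumes "cylinder_category C"
    and "is_presheaf C Xo Xm" and "is_presheaf C Yo Ym"
    and "psh_mor C Xo Xm Yo Ym f"
  shows "((\<forall>i\<in>cof C. \<forall>x\<in>Xo (dom C i).
             bij_betw (pi_map C Yo Ym f i x) (pi_set C Xo Xm i x) (pi_set C Yo Ym i (f (dom C i) x)))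
          \<longleftrightarrow>
          (\<forall>i\<in>cof C. \<forall>x\<in>Xo (dom C i).
             pi_map C Yo Ym f i x ` pi_set C Xo Xm i x = pi_set C Yo Ym i (f (dom C i) x)))
       \<and>
         ((\<forall>i\<in>cof C. \<forall>x\<in>Xo (dom C i).
             pi_map C Yo Ym f i x ` pi_set C Xo Xm i x = pi_set C Yo Ym i (f (dom C i) x))
          \<longleftrightarrow> psh_weq C Xo Xm Yo Ym f)"
proof -
  interpret two C Xo Xm Yo Ym f
    by (unfold_locales) (fact assms)+
  show ?thesis
  proof (intro conjI iffI)
    assume B: "\<forall>i\<in>cof C. \<forall>x\<in>Xo (dom C i).
             bij_betw (pi_map C Yo Ym f i x) (pi_set C Xo Xm i x) (pi_set C Yo Ym i (f (dom C i) x))"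
    show "\<forall>i\<in>cof C. \<forall>x\<in>Xo (dom C i).
             pi_map C Yo Ym f i x ` pi_set C Xo Xm i x = pi_set C Yo Ym i (f (dom C i) x)"
      using B bij_betw_imp_surj_on by blast
  next
    assume S: "\<forall>i\<in>cof C. \<forall>x\<in>Xo (dom C i).
             pi_map C Yo Ym f i x ` pi_set C Xo Xm i x = pi_set C Yo Ym i (f (dom C i) x)"
    show "\<forall>i\<in>cof C. \<forall>x\<in>Xo (dom C i).
             bij_betw (pi_map C Yo Ym f i x) (pi_set C Xo Xm i x) (pi_set C Yo Ym i (f (dom C i) x))"
      using S surj_inj[OF S] unfolding bij_betw_def by blast
  next
    assume S: "\<forall>i\<in>cof C. \<forall>x\<in>Xo (dom C i).
             pi_map C Yo Ym f i x ` pi_set C Xo Xm i x = pi_set C Yo Ym i (f (dom C i) x)"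
    show "psh_weq C Xo Xm Yo Ym f" by (rule surj_weq[OF S])
  next
    assume W: "psh_weq C Xo Xm Yo Ym f"
    show "\<forall>i\<in>cof C. \<forall>x\<in>Xo (dom C i).
             pi_map C Yo Ym f i x ` pi_set C Xo Xm i x = pi_set C Yo Ym i (f (dom C i) x)"
      by (rule weq_surj[OF W])
  qed
qed

end
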